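(* For every $M\geq 1$, $g(M)-h(M)$ equals the number of partitions in $\mathcal G_1(M)$ that have no part equal to $1$.
   Context: The perimeter of a nonempty partition $\lambda$ with largest part $\lambda_1$ and $\ell(\lambda)$ parts is $\lambda_1+\ell(\lambda)-1$. $\mathcal G(M)$ is the set of partitions into odd parts with perimeter $M$, $\mathcal H(M)$ the set of partitions into distinct parts with perimeter $M$; $g(M)$ (resp. $h(M)$) is the total number of parts, summed over all partitions in $\mathcal G(M)$ (resp. $\mathcal H(M)$). $\mathcal G_1(M)$ is the set of partitions with perimeter $M$ in which exactly one distinct even integer occurs as a part (possibly with multiplicity greater than one) and all other parts are odd. *)

theory Defs
  imports Main "HOL-Library.Multiset"
begin

definition is_partition :: "nat multiset \<Rightarrow> bool" where
  "is_partition p \<longleftrightarrow> (\<forall>x \<in># p. 0 < x)"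

definition perimeter :: "nat multiset \<Rightarrow> nat" where
  "perimeter p = Max (set_mset p) + size p - 1"

definition G_set :: "nat \<Rightarrow> nat multiset set" where
  "G_set M = {p. is_partition p \<and> p \<noteq> {#} \<and> (\<forall>x \<in># p. odd x) \<and> perimeter p = M}"

definition H_set :: "nat \<Rightarrow> nat multiset set" where
  "H_set M = {p. is_partition p \<and> p \<noteq> {#} \<and> (\<forall>x. count p x \<le> 1) \<and> perimeter p = M}"

definition g :: "nat \<Rightarrow> nat" where
  "g M = (\<Sum>p \<in> G_set M. size p)"

definition h :: "nat \<Rightarrow> nat" where
  "h M = (\<Sum>p \<in> H_set M. size p)"

definition G1_set :: "nat \<Rightarrow> nat multiset set" where
  "G1_set M = {p. is_partition p \<and> p \<noteq> {#} \<and> card {x \<in> set_mset p. even x} = 1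
                  \<and> perimeter p = M}"

end

theory Submission
  imports Defs
begin


definition FF :: "nat \<Rightarrow> nat" where "FF n = (\<Sum>j\<le>n. (n - j) choose j)"
definition GG :: "nat \<Rightarrow> nat" where "GG n = (\<Sum>j\<le>n. j * ((n - j) choose j))"

lemma FF_rec: "FF (Suc (Suc n)) = FF (Suc n) + FF n"
proof -
  have a: "FF (Suc (Suc n)) = 1 + (\<Sum>i\<le>Suc n. (Suc n - i) choose Suc i)"
    unfolding FF_def by (subst sum.atMost_Suc_shift) simp
  have b: "(\<Sum>i\<le>Suc n. (Suc n - i) choose Suc i) = (\<Sum>i\<le>n. (Suc n - i) choose Suc i)"
    by simp
  have c: "(\<Sum>i\<le>n. (Suc n - i) choose Suc i) = (\<Sum>i\<le>n. ((n - i) choose i) + ((n-i) choose Suc i))"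
    by (intro sum.cong refl) (simp add: Suc_diff_le)
  have d: "FF (Suc n) = 1 + (\<Sum>i\<le>n. (n - i) choose Suc i)"
    unfolding FF_def by (subst sum.atMost_Suc_shift) simp
  show ?thesis using a b c d by (simp add: sum.distrib FF_def)
qed

lemma GG_rec: "GG (Suc (Suc n)) = GG (Suc n) + GG n + FF n"
proof -
  have a: "GG (Suc (Suc n)) = (\<Sum>i\<le>Suc n. Suc i * ((Suc n - i) choose Suc i))"
    unfolding GG_def by (subst sum.atMost_Suc_shift) simp
  have b: "(\<Sum>i\<le>Suc n. Suc i * ((Suc n - i) choose Suc i)) = (\<Sum>i\<le>n. Suc i * ((Suc n - i) choose Suc i))"
    by simp
  have c: "(\<Sum>i\<le>n. Suc i * ((Suc n - i) choose Suc i)) = (\<Sum>i\<le>n. Suc i * ((n - i) choose i) + Suc i * ((n-i) choose Suc i))"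
    by (intro sum.cong refl) (simp add: Suc_diff_le algebra_simps)
  have d: "GG (Suc n) = (\<Sum>i\<le>n. Suc i * ((n - i) choose Suc i))"
    unfolding GG_def by (subst sum.atMost_Suc_shift) simp
  have e: "(\<Sum>i\<le>n. Suc i * ((n - i) choose i)) = GG n + FF n"
    unfolding GG_def FF_def by (simp add: sum.distrib)
  show ?thesis using a b c d e by (simp add: sum.distrib)
qed

lemma key: "int (n+1) * int (FF (n+1)) - 3 * int (GG (n+1)) = int (FF n) + int (GG n)"
proof (induction n rule: nat_less_induct)
  case (1 n)
  show ?case
  proof (cases n)
    case 0 then show ?thesis by (simp add: FF_def GG_def)
  next
    case (Suc m)
    show ?thesis
    proof (cases m)
      case 0 then show ?thesis using Suc by (simp add: FF_def GG_def numeral_2_eq_2)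
    next
      case (Suc k)
      have h1: "int (k+1+1) * int (FF (k+1+1)) - 3 * int (GG (k+1+1)) = int (FF (k+1)) + int (GG (k+1))"
        using 1 Suc \<open>n = Suc m\<close> by auto
      have h2: "int (k+1) * int (FF (k+1)) - 3 * int (GG (k+1)) = int (FF k) + int (GG k)"
        using 1 Suc \<open>n = Suc m\<close> by auto
      have r1: "FF (Suc (Suc (Suc k))) = FF (Suc (Suc k)) + FF (Suc k)" by (rule FF_rec)
      have r2: "FF (Suc (Suc k)) = FF (Suc k) + FF k" by (rule FF_rec)
      have r3: "GG (Suc (Suc (Suc k))) = GG (Suc (Suc k)) + GG (Suc k) + FF (Suc k)" by (rule GG_rec)
      have r4: "GG (Suc (Suc k)) = GG (Suc k) + GG k + FF k" by (rule GG_rec)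
      show ?thesis using h1 h2 r1 r2 r3 r4 \<open>n = Suc m\<close> Suc
        by (simp add: algebra_simps)
    qed
  qed
qed


lemma part_basic:
  assumes "is_partition p" "p \<noteq> {#}" "perimeter p = M"
  shows "Max (set_mset p) \<in># p" "\<And>x. x \<in># p \<Longrightarrow> x \<le> Max (set_mset p)"
    "Max (set_mset p) + size p = M + 1" "size p \<ge> 1" "Max (set_mset p) \<ge> 1"
proof -
  show m: "Max (set_mset p) \<in># p" using assms(2) by simp
  show "\<And>x. x \<in># p \<Longrightarrow> x \<le> Max (set_mset p)" by simp
  show s: "size p \<ge> 1" using assms(2) by (simp add: Suc_le_eq nonempty_has_size)
  show "Max (set_mset p) \<ge> 1" using m assms(1) by (auto simp: is_partition_def Suc_le_eq)
  then show "Max (set_mset p) + size p = M + 1" using s assms(3) by (simp add: perimeter_def)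
qed

lemma Max_add_eq:
  assumes "\<And>x. x \<in># q \<Longrightarrow> x \<le> L"
  shows "Max (set_mset (q + {#L#})) = L"
  using assms by (intro Max_eqI) auto

lemma finite_parts: "finite {p::nat multiset. is_partition p \<and> p \<noteq> {#} \<and> perimeter p = M}"
proof -
  have "{p::nat multiset. is_partition p \<and> p \<noteq> {#} \<and> perimeter p = M} \<subseteq> (\<Union>n\<le>M. multisets_of_size {..M} n)"
  proof
    fix p assume "p \<in> {p::nat multiset. is_partition p \<and> p \<noteq> {#} \<and> perimeter p = M}"
    then have a: "is_partition p" "p \<noteq> {#}" "perimeter p = M" by auto
    note b = part_basic[OF a]
    have "Max (set_mset p) \<le> M" using b(3) b(4) by linarith
    then have "set_mset p \<subseteq> {..M}" using b(2) by (meson atMost_iff order_trans subsetI)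
    moreover have "size p \<le> M" using b(3) b(5) by simp
    ultimately show "p \<in> (\<Union>n\<le>M. multisets_of_size {..M} n)" by (auto simp: multisets_of_size_def)
  qed
  moreover have "finite (\<Union>n\<le>M. multisets_of_size {..M} n)" by auto
  ultimately show ?thesis by (rule finite_subset)
qed

lemma card_group: "finite A \<Longrightarrow> finite T \<Longrightarrow> f ` A \<subseteq> T \<Longrightarrow> card A = (\<Sum>y\<in>T. card {x\<in>A. f x = y})"
  using sum.group[of A T f "\<lambda>_. 1::nat"] by simp

lemma card_odd_le: "card {x::nat. odd x \<and> x \<le> 2*j+1} = j+1"
proof -
  have "{x::nat. odd x \<and> x \<le> 2*j+1} = (\<lambda>i. 2*i+1) ` {..j}"
    by (auto simp: image_iff elim!: oddE)
  moreover have "inj_on (\<lambda>i::nat. 2*i+1) {..j}" by (auto simp: inj_on_def)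
  ultimately show ?thesis by (simp add: card_image)
qed

lemma card_odd3_lt: "card {x::nat. odd x \<and> 3 \<le> x \<and> x < 2*b+2} = b"
proof -
  have "{x::nat. odd x \<and> 3 \<le> x \<and> x < 2*b+2} = (\<lambda>i. 2*i+3) ` {..<b}"
    apply (auto simp: image_iff elim!: oddE)
    subgoal for y apply (rule bexI[of _ "y - 1"]) by auto done
  moreover have "inj_on (\<lambda>i::nat. 2*i+3) {..<b}" by (auto simp: inj_on_def)
  ultimately show ?thesis by (simp add: card_image)
qed

lemma card_odd3_le: "card {x::nat. odd x \<and> 3 \<le> x \<and> x \<le> 2*t+1} = t"
proof -
  have "{x::nat. odd x \<and> 3 \<le> x \<and> x \<le> 2*t+1} = (\<lambda>i. 2*i+3) ` {..<t}"
    apply (auto simp: image_iff elim!: oddE)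
    subgoal for y apply (rule bexI[of _ "y - 1"]) by auto done
  moreover have "inj_on (\<lambda>i::nat. 2*i+3) {..<t}" by (auto simp: inj_on_def)
  ultimately show ?thesis by (simp add: card_image)
qed

lemma card_even_lt: "card {x::nat. even x \<and> 2 \<le> x \<and> x < 2*t+1} = t"
proof -
  have "{x::nat. even x \<and> 2 \<le> x \<and> x < 2*t+1} = (\<lambda>i. 2*i+2) ` {..<t}"
    apply (auto simp: image_iff elim!: evenE)
    subgoal for y apply (rule bexI[of _ "y - 1"]) by auto done
  moreover have "inj_on (\<lambda>i::nat. 2*i+2) {..<t}" by (auto simp: inj_on_def)
  ultimately show ?thesis by (simp add: card_image)
qed

lemma G_fiber:
  assumes "2*j < M"
  shows "{p \<in> G_set M. (Max (set_mset p) - 1) div 2 = j} =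
         (\<lambda>q. q + {#2*j+1#}) ` multisets_of_size {x. odd x \<and> x \<le> 2*j+1} (M - 1 - 2*j)"
proof (intro set_eqI iffI)
  fix p assume "p \<in> {p \<in> G_set M. (Max (set_mset p) - 1) div 2 = j}"
  then have a: "is_partition p" "p \<noteq> {#}" "perimeter p = M" "\<forall>x\<in>#p. odd x"
     and j: "(Max (set_mset p) - 1) div 2 = j" by (auto simp: G_set_def)
  note b = part_basic[OF a(1-3)]
  have L: "Max (set_mset p) = 2*j+1" using j a(4) b(1) by (auto elim!: oddE)
  define q where "q = p - {#2*j+1#}"
  have pq: "p = q + {#2*j+1#}" using b(1) L by (simp add: q_def)
  have "set_mset q \<subseteq> {x. odd x \<and> x \<le> 2*j+1}"
    using a(4) b(2) L by (auto simp: q_def dest: in_diffD)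
  moreover have "size q = M - 1 - 2*j" using b(3) L pq by simp
  ultimately show "p \<in> (\<lambda>q. q + {#2*j+1#}) ` multisets_of_size {x. odd x \<and> x \<le> 2*j+1} (M - 1 - 2*j)"
    using pq by (auto simp: multisets_of_size_def)
next
  fix p assume "p \<in> (\<lambda>q. q + {#2*j+1#}) ` multisets_of_size {x. odd x \<and> x \<le> 2*j+1} (M - 1 - 2*j)"
  then obtain q where pq: "p = q + {#2*j+1#}" and q: "set_mset q \<subseteq> {x. odd x \<and> x \<le> 2*j+1}"
    "size q = M - 1 - 2*j" by (auto simp: multisets_of_size_def)
  have L: "Max (set_mset p) = 2*j+1" unfolding pq using q by (intro Max_add_eq) auto
  have "is_partition p" using q pq by (auto simp: is_partition_def subset_iff intro!: odd_pos)
  moreover have "perimeter p = M" using L q pq assms by (simp add: perimeter_def)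
  ultimately show "p \<in> {p \<in> G_set M. (Max (set_mset p) - 1) div 2 = j}"
    using q pq L by (auto simp: G_set_def)
qed

lemma G_fiber_empty:
  assumes "2*j \<ge> M"
  shows "{p \<in> G_set M. (Max (set_mset p) - 1) div 2 = j} = {}"
proof (rule ccontr)
  assume "\<not> ?thesis"
  then obtain p where p: "p \<in> G_set M" "(Max (set_mset p) - 1) div 2 = j" by auto
  then have a: "is_partition p" "p \<noteq> {#}" "perimeter p = M" "\<forall>x\<in>#p. odd x"
    by (auto simp: G_set_def)
  note b = part_basic[OF a(1-3)]
  have L: "Max (set_mset p) = 2*j+1" using p(2) a(4) b(1) by (auto elim!: oddE)
  show False using L b(3) b(4) assms by linarith
qed

lemma G_fiber_size: "p \<in> {p \<in> G_set M. (Max (set_mset p) - 1) div 2 = j} \<Longrightarrow> size p = M - 2*j"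
proof -
  assume p: "p \<in> {p \<in> G_set M. (Max (set_mset p) - 1) div 2 = j}"
  then have a: "is_partition p" "p \<noteq> {#}" "perimeter p = M" "\<forall>x\<in>#p. odd x"
    by (auto simp: G_set_def)
  note b = part_basic[OF a(1-3)]
  have L: "Max (set_mset p) = 2*j+1" using p a(4) b(1) by (auto elim!: oddE)
  show ?thesis using L b(3) by linarith
qed

lemma G_fiber_card: assumes M1: "M \<ge> 1" shows "card {p \<in> G_set M. (Max (set_mset p) - 1) div 2 = j} = (M - 1 - j) choose j"
proof (cases "2*j < M")
  case True
  have inj: "inj_on (\<lambda>q. q + {#2*j+1#}) X" for X by (auto simp: inj_on_def)
  have fin: "finite {x::nat. odd x \<and> x \<le> 2*j+1}" by auto
  have "card {p \<in> G_set M. (Max (set_mset p) - 1) div 2 = j} = (j + 1 + (M - 1 - 2*j) - 1) choose (M - 1 - 2*j)"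
    unfolding G_fiber[OF True] card_image[OF inj] card_multisets_of_size[OF fin] card_odd_le ..
  also have "\<dots> = (M - 1 - j) choose (M - 1 - 2*j)" using True by (simp add: algebra_simps)
  also have "\<dots> = (M - 1 - j) choose j" using True
    by (subst binomial_symmetric) (auto simp: algebra_simps)
  finally show ?thesis .
next
  case False
  then have "M - 1 - j < j" using \<open>M \<ge> 1\<close> by linarith
  moreover have "{p \<in> G_set M. (Max (set_mset p) - 1) div 2 = j} = {}" using G_fiber_empty[of M j] False by linarith
  ultimately show ?thesis by (metis card.empty binomial_eq_0)
qed

lemma g_formula: assumes M1: "M \<ge> 1" shows "g M = (\<Sum>j\<le>M. (M - 2*j) * ((M - 1 - j) choose j))"
proof -
  have fin: "finite (G_set M)" by (rule finite_subset[OF _ finite_parts[of M]]) (auto simp: G_set_def)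
  have sub: "(\<lambda>p. (Max (set_mset p) - 1) div 2) ` G_set M \<subseteq> {..M}"
  proof
    fix y assume "y \<in> (\<lambda>p. (Max (set_mset p) - 1) div 2) ` G_set M"
    then obtain p where "p \<in> G_set M" "y = (Max (set_mset p) - 1) div 2" by auto
    then have a: "is_partition p" "p \<noteq> {#}" "perimeter p = M" "y = (Max (set_mset p) - 1) div 2"
      by (auto simp: G_set_def)
    note b = part_basic[OF a(1-3)]
    show "y \<in> {..M}" using a(4) b(3) by simp
  qed
  have "g M = (\<Sum>j\<le>M. \<Sum>p\<in>{p \<in> G_set M. (Max (set_mset p) - 1) div 2 = j}. size p)"
    unfolding g_def using sum.group[OF fin _ sub, of size] by simp
  also have "\<dots> = (\<Sum>j\<le>M. (M - 2*j) * ((M - 1 - j) choose j))"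
  proof (intro sum.cong refl)
    fix j
    have "(\<Sum>p\<in>{p \<in> G_set M. (Max (set_mset p) - 1) div 2 = j}. size p) =
          (\<Sum>p\<in>{p \<in> G_set M. (Max (set_mset p) - 1) div 2 = j}. M - 2*j)"
      by (intro sum.cong refl G_fiber_size)
    then show "(\<Sum>p\<in>{p \<in> G_set M. (Max (set_mset p) - 1) div 2 = j}. size p) = (M - 2*j) * ((M - 1 - j) choose j)"
      using G_fiber_card[of M j] \<open>M \<ge> 1\<close> by simp
  qed
  finally show ?thesis .
qed

lemma distinct_mset_set:
  assumes "\<And>x. count p x \<le> 1"
  shows "p = mset_set (set_mset p)"
proof (rule multiset_eqI)
  fix x
  show "count p x = count (mset_set (set_mset p)) x"
    using assms[of x] by (cases "count p x") (auto simp: count_mset_set' not_in_iff)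
qed

lemma H_fiber:
  assumes "i < M"
  shows "{p \<in> H_set M. size p - 1 = i} =
         (\<lambda>S. mset_set (insert (M-i) S)) ` {S. S \<subseteq> {1..<M-i} \<and> card S = i}"
proof (intro set_eqI iffI)
  fix p assume "p \<in> {p \<in> H_set M. size p - 1 = i}"
  then have a: "is_partition p" "p \<noteq> {#}" "perimeter p = M" "\<And>x. count p x \<le> 1"
     and i: "size p - 1 = i" by (auto simp: H_set_def)
  note b = part_basic[OF a(1-3)]
  have pe: "p = mset_set (set_mset p)" by (rule distinct_mset_set[OF a(4)])
  have sz: "size p = card (set_mset p)" by (subst pe) simp
  have L: "Max (set_mset p) = M - i" using b(3) i b(4) by linarith
  define S where "S = set_mset p - {M - i}"
  have ins: "set_mset p = insert (M-i) S" using b(1) L by (auto simp: S_def)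
  have "S \<subseteq> {1..<M-i}"
  proof
    fix x assume x: "x \<in> S"
    then have "x \<in># p" "x \<noteq> M - i" by (auto simp: S_def)
    then have "x \<le> M - i" "x > 0" "x \<noteq> M - i" using b(2) L a(1) by (auto simp: is_partition_def)
    then show "x \<in> {1..<M-i}" by simp
  qed
  moreover have "card S = i" using sz i b(1) L by (simp add: S_def)
  ultimately show "p \<in> (\<lambda>S. mset_set (insert (M-i) S)) ` {S. S \<subseteq> {1..<M-i} \<and> card S = i}"
    using pe ins by auto
next
  fix p assume "p \<in> (\<lambda>S. mset_set (insert (M-i) S)) ` {S. S \<subseteq> {1..<M-i} \<and> card S = i}"
  then obtain S where pS: "p = mset_set (insert (M-i) S)" and S: "S \<subseteq> {1..<M-i}" "card S = i" by auto
  have fin: "finite S" using S(1) finite_subset by blast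
  have nS: "M - i \<notin> S" using S(1) by auto
  have sp: "set_mset p = insert (M-i) S" using pS fin by simp
  have L: "Max (set_mset p) = M - i" unfolding sp using S(1) fin by (intro Max_eqI) auto
  have szp: "size p = i + 1" using pS fin nS S(2) by simp
  have "is_partition p" using sp S(1) assms by (auto simp: is_partition_def)
  moreover have "perimeter p = M" using L szp assms by (simp add: perimeter_def)
  moreover have "\<And>x. count p x \<le> 1" using pS fin by (simp add: count_mset_set')
  moreover have "p \<noteq> {#}" using szp by auto
  ultimately show "p \<in> {p \<in> H_set M. size p - 1 = i}" using szp by (auto simp: H_set_def)
qed

lemma H_fiber_empty:
  assumes "i \<ge> M"
  shows "{p \<in> H_set M. size p - 1 = i} = {}"
proof (rule ccontr)
  assume "\<not> ?thesis"
  then obtain p where p: "p \<in> H_set M" "size p - 1 = i" by auto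
  then have a: "is_partition p" "p \<noteq> {#}" "perimeter p = M" by (auto simp: H_set_def)
  note b = part_basic[OF a(1-3)]
  show False using p(2) b(3) b(4) b(5) assms by linarith
qed

lemma H_fiber_card: assumes M1: "M \<ge> 1" shows "card {p \<in> H_set M. size p - 1 = i} = (M - 1 - i) choose i"
proof (cases "i < M")
  case True
  have inj: "inj_on (\<lambda>S. mset_set (insert (M-i) S)) {S. S \<subseteq> {1..<M-i} \<and> card S = i}"
  proof (rule inj_onI)
    fix S T assume S: "S \<in> {S. S \<subseteq> {1..<M-i} \<and> card S = i}" and T: "T \<in> {S. S \<subseteq> {1..<M-i} \<and> card S = i}"
      and e: "mset_set (insert (M-i) S) = mset_set (insert (M-i) T)"
    have fS: "finite S" "finite T" using S T finite_subset by auto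
    have "insert (M-i) S = insert (M-i) T" using e fS by (metis finite_insert finite_set_mset_mset_set)
    moreover have "M - i \<notin> S" "M - i \<notin> T" using S T by auto
    ultimately show "S = T" by (metis insert_ident)
  qed
  have "card {p \<in> H_set M. size p - 1 = i} = card {1..<M-i} choose i"
    unfolding H_fiber[OF True] card_image[OF inj] by (rule n_subsets) simp
  also have "\<dots> = (M - 1 - i) choose i" by simp
  finally show ?thesis .
next
  case False
  then have "M - 1 - i < i" using M1 by linarith
  moreover have "{p \<in> H_set M. size p - 1 = i} = {}" using H_fiber_empty[of M i] False by linarith
  ultimately show ?thesis by (metis card.empty binomial_eq_0)
qed

lemma h_formula: assumes M1: "M \<ge> 1" shows "h M = (\<Sum>i\<le>M. (i + 1) * ((M - 1 - i) choose i))"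
proof -
  have fin: "finite (H_set M)" by (rule finite_subset[OF _ finite_parts[of M]]) (auto simp: H_set_def)
  have sub: "(\<lambda>p. size p - 1) ` H_set M \<subseteq> {..M}"
  proof
    fix y assume "y \<in> (\<lambda>p. size p - 1) ` H_set M"
    then obtain p where "p \<in> H_set M" "y = size p - 1" by auto
    then have a: "is_partition p" "p \<noteq> {#}" "perimeter p = M" "y = size p - 1"
      by (auto simp: H_set_def)
    note b = part_basic[OF a(1-3)]
    show "y \<in> {..M}" using a(4) b(3) by simp
  qed
  have "h M = (\<Sum>i\<le>M. \<Sum>p\<in>{p \<in> H_set M. size p - 1 = i}. size p)"
    unfolding h_def using sum.group[OF fin _ sub, of size] by simp
  also have "\<dots> = (\<Sum>i\<le>M. (i + 1) * ((M - 1 - i) choose i))"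
  proof (intro sum.cong refl)
    fix i
    have "(\<Sum>p\<in>{p \<in> H_set M. size p - 1 = i}. size p) = (\<Sum>p\<in>{p \<in> H_set M. size p - 1 = i}. i + 1)"
    proof (intro sum.cong refl)
      fix p assume "p \<in> {p \<in> H_set M. size p - 1 = i}"
      then have a: "is_partition p" "p \<noteq> {#}" "perimeter p = M" "size p - 1 = i" by (auto simp: H_set_def)
      show "size p = i + 1" using a(4) part_basic(4)[OF a(1-3)] by linarith
    qed
    then show "(\<Sum>p\<in>{p \<in> H_set M. size p - 1 = i}. size p) = (i + 1) * ((M - 1 - i) choose i)"
      using H_fiber_card[OF M1, of i] by simp
  qed
  finally show ?thesis .
qed

definition RR :: "nat \<Rightarrow> nat multiset set" where "RR M = {p \<in> G1_set M. 1 \<notin># p}"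

lemma RR_D:
  assumes "p \<in> RR M"
  shows "is_partition p" "p \<noteq> {#}" "perimeter p = M" "1 \<notin># p"
    "\<exists>e. {x \<in> set_mset p. even x} = {e}"
  using assms by (auto simp: RR_def G1_set_def card_1_singleton_iff)

lemma odd3: "odd (x::nat) \<Longrightarrow> x \<noteq> 1 \<Longrightarrow> 3 \<le> x"
  by presburger

lemma A_fiber:
  assumes "2*b+2 \<le> M"
  shows "{p \<in> RR M. even (Max (set_mset p)) \<and> Max (set_mset p) div 2 - 1 = b} =
         (\<lambda>q. q + {#2*b+2#}) ` multisets_of_size ({x. odd x \<and> 3 \<le> x \<and> x < 2*b+2} \<union> {2*b+2}) (M - 2 - 2*b)"
proof (intro set_eqI iffI)
  fix p assume "p \<in> {p \<in> RR M. even (Max (set_mset p)) \<and> Max (set_mset p) div 2 - 1 = b}"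
  then have pR: "p \<in> RR M" and ev: "even (Max (set_mset p))" and bb: "Max (set_mset p) div 2 - 1 = b" by auto
  note a = RR_D[OF pR]
  note c = part_basic[OF a(1-3)]
  obtain e where e: "{x \<in> set_mset p. even x} = {e}" using a(5) by blast
  have L: "Max (set_mset p) = 2*b+2" using ev bb c(5) by (auto elim!: evenE)
  have eL: "e = 2*b+2" using e c(1) L by auto
  define q where "q = p - {#2*b+2#}"
  have pq: "p = q + {#2*b+2#}" using c(1) L by (simp add: q_def)
  have "set_mset q \<subseteq> {x. odd x \<and> 3 \<le> x \<and> x < 2*b+2} \<union> {2*b+2}"
  proof
    fix x assume "x \<in># q"
    then have xp: "x \<in># p" using pq by simp
    then have x: "x \<le> 2*b+2" "x \<noteq> 1" "x > 0" using c(2) L a(4) a(1) by (auto simp: is_partition_def)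
    show "x \<in> {x. odd x \<and> 3 \<le> x \<and> x < 2*b+2} \<union> {2*b+2}"
    proof (cases "even x")
      case True then have "x \<in> {x \<in> set_mset p. even x}" using xp by simp
      then show ?thesis using e eL by simp
    next
      case False then show ?thesis using x odd3[of x] by auto
    qed
  qed
  moreover have "size q = M - 2 - 2*b" using c(3) L pq by simp
  ultimately show "p \<in> (\<lambda>q. q + {#2*b+2#}) ` multisets_of_size ({x. odd x \<and> 3 \<le> x \<and> x < 2*b+2} \<union> {2*b+2}) (M - 2 - 2*b)"
    using pq by (auto simp: multisets_of_size_def)
next
  fix p assume "p \<in> (\<lambda>q. q + {#2*b+2#}) ` multisets_of_size ({x. odd x \<and> 3 \<le> x \<and> x < 2*b+2} \<union> {2*b+2}) (M - 2 - 2*b)"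
  then obtain q where pq: "p = q + {#2*b+2#}" and q: "set_mset q \<subseteq> {x. odd x \<and> 3 \<le> x \<and> x < 2*b+2} \<union> {2*b+2}"
    "size q = M - 2 - 2*b" by (auto simp: multisets_of_size_def)
  have L: "Max (set_mset p) = 2*b+2" unfolding pq using q by (intro Max_add_eq) auto
  have "is_partition p" using q pq by (auto simp: is_partition_def subset_iff)
  moreover have "perimeter p = M" using L q pq assms by (simp add: perimeter_def)
  moreover have "{x \<in> set_mset p. even x} = {2*b+2}" using q pq by auto
  moreover have "1 \<notin># p" using q pq by auto
  ultimately show "p \<in> {p \<in> RR M. even (Max (set_mset p)) \<and> Max (set_mset p) div 2 - 1 = b}"
    using L pq by (auto simp: RR_def G1_set_def)
qed

lemma A_fiber_empty:
  assumes "2*b+2 > M"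
  shows "{p \<in> RR M. even (Max (set_mset p)) \<and> Max (set_mset p) div 2 - 1 = b} = {}"
proof (rule ccontr)
  assume "\<not> ?thesis"
  then obtain p where pR: "p \<in> RR M" and ev: "even (Max (set_mset p))" and bb: "Max (set_mset p) div 2 - 1 = b" by auto
  note a = RR_D[OF pR]
  note c = part_basic[OF a(1-3)]
  have L: "Max (set_mset p) = 2*b+2" using ev bb c(5) by (auto elim!: evenE)
  show False using L c(3) c(4) assms by linarith
qed

lemma A_fiber_card: assumes M2: "M \<ge> 2"
  shows "card {p \<in> RR M. even (Max (set_mset p)) \<and> Max (set_mset p) div 2 - 1 = b} = (M - 2 - b) choose b"
proof (cases "2*b+2 \<le> M")
  case True
  have inj: "inj_on (\<lambda>q. q + {#2*b+2#}) X" for X by (auto simp: inj_on_def)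
  have fin: "finite ({x::nat. odd x \<and> 3 \<le> x \<and> x < 2*b+2} \<union> {2*b+2})" by auto
  have cd: "card ({x::nat. odd x \<and> 3 \<le> x \<and> x < 2*b+2} \<union> {2*b+2}) = b + 1"
    using card_odd3_lt[of b] by (subst card_Un_disjoint) auto
  have "card {p \<in> RR M. even (Max (set_mset p)) \<and> Max (set_mset p) div 2 - 1 = b} = (b + 1 + (M - 2 - 2*b) - 1) choose (M - 2 - 2*b)"
    unfolding A_fiber[OF True] card_image[OF inj] card_multisets_of_size[OF fin] cd ..
  also have "\<dots> = (M - 2 - b) choose (M - 2 - 2*b)" using True by (simp add: algebra_simps)
  also have "\<dots> = (M - 2 - b) choose b"
  proof -
    have "M - 2 - 2*b = (M - 2 - b) - b" by simp
    moreover have "b \<le> M - 2 - b" using True by simp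
    ultimately show ?thesis using binomial_symmetric[of b "M - 2 - b"] by simp
  qed
  finally show ?thesis .
next
  case False
  then have "M - 2 - b < b" using M2 by linarith
  moreover have "{p \<in> RR M. even (Max (set_mset p)) \<and> Max (set_mset p) div 2 - 1 = b} = {}"
    using A_fiber_empty[of M b] False by linarith
  ultimately show ?thesis by (metis card.empty binomial_eq_0)
qed

definition EvS :: "nat \<Rightarrow> nat set" where "EvS t = {x. even x \<and> 2 \<le> x \<and> x < 2*t+1}"
definition OddS :: "nat \<Rightarrow> nat set" where "OddS t = {x. odd x \<and> 3 \<le> x \<and> x \<le> 2*t+1}"

lemma B_fiber:
  assumes "2*t+2 \<le> M"
  shows "{p \<in> RR M. odd (Max (set_mset p)) \<and> (Max (set_mset p) - 1) div 2 = t} =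
         (\<lambda>(e,q). q + {#e#} + {#2*t+1#}) ` (SIGMA e:EvS t. multisets_of_size (OddS t \<union> {e}) (M - 2 - 2*t))"
proof (intro set_eqI iffI)
  fix p assume "p \<in> {p \<in> RR M. odd (Max (set_mset p)) \<and> (Max (set_mset p) - 1) div 2 = t}"
  then have pR: "p \<in> RR M" and od: "odd (Max (set_mset p))" and tt: "(Max (set_mset p) - 1) div 2 = t" by auto
  note a = RR_D[OF pR]
  note c = part_basic[OF a(1-3)]
  obtain e where e: "{x \<in> set_mset p. even x} = {e}" using a(5) by blast
  have L: "Max (set_mset p) = 2*t+1" using od tt by (auto elim!: oddE)
  have ep: "e \<in># p" "even e" using e by auto
  have eL: "e \<noteq> 2*t+1" using ep by auto
  have eE: "e \<in> EvS t" using ep c(2)[of e] L a(1) eL unfolding EvS_def is_partition_def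
    by (auto elim!: evenE)
  define q where "q = p - {#2*t+1#} - {#e#}"
  have pq: "p = q + {#e#} + {#2*t+1#}"
  proof -
    have "p = add_mset (2*t+1) (p - {#2*t+1#})" using c(1) L by simp
    moreover have "e \<in># p - {#2*t+1#}" using ep eL by (simp add: in_diff_count)
    ultimately show ?thesis by (metis add_mset_diff_bothsides insert_DiffM q_def add_mset_add_single union_mset_add_mset_left)
  qed
  have "set_mset q \<subseteq> OddS t \<union> {e}"
  proof
    fix x assume "x \<in># q"
    then have xp: "x \<in># p" using pq by simp
    then have x: "x \<le> 2*t+1" "x \<noteq> 1" "x > 0" using c(2) L a(4) a(1) by (auto simp: is_partition_def)
    show "x \<in> OddS t \<union> {e}"
    proof (cases "even x")
      case True then have "x \<in> {x \<in> set_mset p. even x}" using xp by simp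
      then show ?thesis using e by simp
    next
      case False then show ?thesis using x odd3[of x] by (auto simp: OddS_def)
    qed
  qed
  moreover have "size q = M - 2 - 2*t" using c(3) L pq by simp
  ultimately show "p \<in> (\<lambda>(e,q). q + {#e#} + {#2*t+1#}) ` (SIGMA e:EvS t. multisets_of_size (OddS t \<union> {e}) (M - 2 - 2*t))"
    using pq eE by (auto simp: multisets_of_size_def image_iff intro!: bexI[of _ "(e,q)"])
next
  fix p assume "p \<in> (\<lambda>(e,q). q + {#e#} + {#2*t+1#}) ` (SIGMA e:EvS t. multisets_of_size (OddS t \<union> {e}) (M - 2 - 2*t))"
  then obtain e q where pq: "p = q + {#e#} + {#2*t+1#}" and eE: "e \<in> EvS t" and q: "set_mset q \<subseteq> OddS t \<union> {e}"
    "size q = M - 2 - 2*t" by (auto simp: multisets_of_size_def)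
  have eE': "even e" "2 \<le> e" "e < 2*t+1" using eE by (auto simp: EvS_def)
  have L: "Max (set_mset p) = 2*t+1" unfolding pq using q eE' by (intro Max_eqI) (auto simp: OddS_def)
  have "is_partition p" using q pq eE' by (auto simp: is_partition_def subset_iff OddS_def)
  moreover have "perimeter p = M" using L q pq assms by (simp add: perimeter_def)
  moreover have "{x \<in> set_mset p. even x} = {e}" using q pq eE' by (auto simp: OddS_def)
  moreover have "1 \<notin># p" using q pq eE' by (auto simp: OddS_def)
  ultimately show "p \<in> {p \<in> RR M. odd (Max (set_mset p)) \<and> (Max (set_mset p) - 1) div 2 = t}"
    using L pq by (auto simp: RR_def G1_set_def)
qed

lemma B_fiber_empty:
  assumes "2*t+2 > M"
  shows "{p \<in> RR M. odd (Max (set_mset p)) \<and> (Max (set_mset p) - 1) div 2 = t} = {}"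
proof (rule ccontr)
  assume "\<not> ?thesis"
  then obtain p where pR: "p \<in> RR M" and od: "odd (Max (set_mset p))" and tt: "(Max (set_mset p) - 1) div 2 = t" by auto
  note a = RR_D[OF pR]
  note c = part_basic[OF a(1-3)]
  obtain e where e: "{x \<in> set_mset p. even x} = {e}" using a(5) by blast
  have L: "Max (set_mset p) = 2*t+1" using od tt by (auto elim!: oddE)
  have ep: "e \<in># p" "even e" using e by auto
  have eL: "e \<noteq> 2*t+1" using ep by auto
  have "p = add_mset (2*t+1) (p - {#2*t+1#})" using c(1) L by simp
  moreover have "e \<in># p - {#2*t+1#}" using ep eL by (simp add: in_diff_count)
  ultimately have "size p \<ge> 2"
    by (metis One_nat_def Suc_1 Suc_le_mono nonempty_has_size size_add_mset empty_iff set_mset_empty Suc_le_eq)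
  then show False using L c(3) assms by linarith
qed

lemma B_fiber_card: assumes M2: "M \<ge> 2"
  shows "card {p \<in> RR M. odd (Max (set_mset p)) \<and> (Max (set_mset p) - 1) div 2 = t} = t * ((M - 2 - t) choose t)"
proof (cases "2*t+2 \<le> M")
  case True
  have inj: "inj_on (\<lambda>(e,q). q + {#e#} + {#2*t+1#}) (SIGMA e:EvS t. multisets_of_size (OddS t \<union> {e}) (M - 2 - 2*t))"
  proof (rule inj_onI, clarify)
    fix e q e' q'
    assume e: "e \<in> EvS t" "q \<in> multisets_of_size (OddS t \<union> {e}) (M - 2 - 2*t)"
      and e': "e' \<in> EvS t" "q' \<in> multisets_of_size (OddS t \<union> {e'}) (M - 2 - 2*t)"
      and eq: "q + {#e#} + {#2*t+1#} = q' + {#e'#} + {#2*t+1#}"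
    have eq2: "q + {#e#} = q' + {#e'#}" using eq by simp
    have "e \<in># q' + {#e'#}" unfolding eq2[symmetric] by simp
    moreover have "even e" using e by (simp add: EvS_def)
    moreover have "set_mset q' \<subseteq> OddS t \<union> {e'}" using e' by (simp add: multisets_of_size_def)
    ultimately have "e = e'" by (auto simp: OddS_def)
    then show "e = e' \<and> q = q'" using eq2 by simp
  qed
  have fin: "finite (OddS t \<union> {e})" for e by (auto simp: OddS_def)
  have cd: "e \<in> EvS t \<Longrightarrow> card (OddS t \<union> {e}) = t + 1" for e
    using card_odd3_le[of t] by (subst card_Un_disjoint) (auto simp: OddS_def EvS_def)
  have finE: "finite (EvS t)" by (auto simp: EvS_def)
  have "card {p \<in> RR M. odd (Max (set_mset p)) \<and> (Max (set_mset p) - 1) div 2 = t} =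
        (\<Sum>e\<in>EvS t. card (multisets_of_size (OddS t \<union> {e}) (M - 2 - 2*t)))"
    unfolding B_fiber[OF True] card_image[OF inj] using finE fin by (subst card_SigmaI) auto
  also have "\<dots> = (\<Sum>e\<in>EvS t. (t + 1 + (M - 2 - 2*t) - 1) choose (M - 2 - 2*t))"
  proof (intro sum.cong refl)
    fix e assume "e \<in> EvS t"
    then show "card (multisets_of_size (OddS t \<union> {e}) (M - 2 - 2*t)) = (t + 1 + (M - 2 - 2*t) - 1) choose (M - 2 - 2*t)"
      unfolding card_multisets_of_size[OF fin] using cd[of e] by presburger
  qed
  also have "\<dots> = t * ((t + 1 + (M - 2 - 2*t) - 1) choose (M - 2 - 2*t))"
    using card_even_lt[of t] by (simp add: EvS_def)
  also have "(t + 1 + (M - 2 - 2*t) - 1) choose (M - 2 - 2*t) = (M - 2 - t) choose t"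
  proof -
    have "t + 1 + (M - 2 - 2*t) - 1 = M - 2 - t" using True by simp
    moreover have "M - 2 - 2*t = (M - 2 - t) - t" by simp
    moreover have "t \<le> M - 2 - t" using True by simp
    ultimately show ?thesis using binomial_symmetric[of t "M - 2 - t"] by simp
  qed
  finally show ?thesis .
next
  case False
  have "t * ((M - 2 - t) choose t) = 0"
  proof (cases "t = 0")
    case False
    then have "M - 2 - t < t" using \<open>\<not> 2*t+2 \<le> M\<close> M2 by linarith
    then show ?thesis by simp
  qed simp
  moreover have "{p \<in> RR M. odd (Max (set_mset p)) \<and> (Max (set_mset p) - 1) div 2 = t} = {}"
    using B_fiber_empty[of M t] False by linarith
  ultimately show ?thesis by (metis card.empty)
qed

lemma rr_formula: assumes M2: "M \<ge> 2"
  shows "card (RR M) = (\<Sum>b\<le>M. (M - 2 - b) choose b) + (\<Sum>t\<le>M. t * ((M - 2 - t) choose t))"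
proof -
  have fin: "finite (RR M)" by (rule finite_subset[OF _ finite_parts[of M]]) (auto simp: RR_def G1_set_def)
  have bnd: "p \<in> RR M \<Longrightarrow> Max (set_mset p) \<le> M" for p
    using part_basic(3,4)[OF RR_D(1-3)] by fastforce
  have split: "RR M = {p \<in> RR M. even (Max (set_mset p))} \<union> {p \<in> RR M. odd (Max (set_mset p))}" by auto
  have "card (RR M) = card {p \<in> RR M. even (Max (set_mset p))} + card {p \<in> RR M. odd (Max (set_mset p))}"
    by (subst split, rule card_Un_disjoint) (use fin in auto)
  also have "card {p \<in> RR M. even (Max (set_mset p))} = (\<Sum>b\<le>M. card {p \<in> {p \<in> RR M. even (Max (set_mset p))}. Max (set_mset p) div 2 - 1 = b})"
  proof (rule card_group)
    show "(\<lambda>p. Max (set_mset p) div 2 - 1) ` {p \<in> RR M. even (Max (set_mset p))} \<subseteq> {..M}"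
    proof
      fix y assume "y \<in> (\<lambda>p. Max (set_mset p) div 2 - 1) ` {p \<in> RR M. even (Max (set_mset p))}"
      then obtain p where "p \<in> RR M" "y = Max (set_mset p) div 2 - 1" by auto
      then show "y \<in> {..M}" using bnd[of p] by (simp add: le_trans[OF diff_le_self] le_trans[OF div_le_dividend])
    qed
  qed (use fin in auto)
  also have "\<dots> = (\<Sum>b\<le>M. (M - 2 - b) choose b)"
  proof (intro sum.cong refl)
    fix b
    have "{p \<in> {p \<in> RR M. even (Max (set_mset p))}. Max (set_mset p) div 2 - 1 = b} =
       {p \<in> RR M. even (Max (set_mset p)) \<and> Max (set_mset p) div 2 - 1 = b}" by auto
    then show "card {p \<in> {p \<in> RR M. even (Max (set_mset p))}. Max (set_mset p) div 2 - 1 = b} = (M - 2 - b) choose b"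
      using A_fiber_card[OF M2, of b] by simp
  qed
  also have "card {p \<in> RR M. odd (Max (set_mset p))} = (\<Sum>t\<le>M. card {p \<in> {p \<in> RR M. odd (Max (set_mset p))}. (Max (set_mset p) - 1) div 2 = t})"
  proof (rule card_group)
    show "(\<lambda>p. (Max (set_mset p) - 1) div 2) ` {p \<in> RR M. odd (Max (set_mset p))} \<subseteq> {..M}"
    proof
      fix y assume "y \<in> (\<lambda>p. (Max (set_mset p) - 1) div 2) ` {p \<in> RR M. odd (Max (set_mset p))}"
      then obtain p where "p \<in> RR M" "y = (Max (set_mset p) - 1) div 2" by auto
      then show "y \<in> {..M}" using bnd[of p] by (simp add: le_trans[OF diff_le_self] le_trans[OF div_le_dividend])
    qed
  qed (use fin in auto)
  also have "\<dots> = (\<Sum>t\<le>M. t * ((M - 2 - t) choose t))"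
  proof (intro sum.cong refl)
    fix t
    have "{p \<in> {p \<in> RR M. odd (Max (set_mset p))}. (Max (set_mset p) - 1) div 2 = t} =
       {p \<in> RR M. odd (Max (set_mset p)) \<and> (Max (set_mset p) - 1) div 2 = t}" by auto
    then show "card {p \<in> {p \<in> RR M. odd (Max (set_mset p))}. (Max (set_mset p) - 1) div 2 = t} = t * ((M - 2 - t) choose t)"
      using B_fiber_card[OF M2, of t] by simp
  qed
  finally show ?thesis .
qed

lemma RR_1: "RR 1 = {}"
proof (rule ccontr)
  assume "RR 1 \<noteq> {}"
  then obtain p where pR: "p \<in> RR 1" by auto
  note a = RR_D[OF pR]
  note c = part_basic[OF a(1-3)]
  have "Max (set_mset p) = 1" using c(3) c(4) c(5) by linarith
  then show False using c(1) a(4) by simp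
qed

lemma sum_ext: "(\<Sum>j\<le>n + k. f j) = (\<Sum>j\<le>n. f j)" if "\<And>j. j > n \<Longrightarrow> f j = 0" for f :: "nat \<Rightarrow> int"
  using that by (induction k) auto

lemma mt1: "int (g 1) - int (h 1) = int (card {p \<in> G1_set 1. 1 \<notin># p})"
proof -
  have a: "g 1 = 1" "h 1 = 1" by (simp_all add: g_formula h_formula)
  have c: "{p \<in> G1_set 1. 1 \<notin># p} = {}" using RR_1 by (simp only: RR_def)
  show ?thesis unfolding a c by simp
qed

theorem mainTheorem7:
  fixes M :: nat
  assumes "M \<ge> 1"
  shows "int (g M) - int (h M) = int (card {p \<in> G1_set M. 1 \<notin># p})"
proof (cases "M = 1")
  case True
  show ?thesis unfolding True by (rule mt1)
next
  case False
  define n where "n = M - 2"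
  have Mn: "M = n + 2" using False assms n_def by linarith
  have gi: "int (g M) = (\<Sum>j\<le>n+1. (int n + 2 - 2 * int j) * int ((n + 1 - j) choose j))"
  proof -
    have "int (g M) = (\<Sum>j\<le>(n+1)+1. int ((M - 2*j) * ((M - 1 - j) choose j)))"
      using g_formula[of M] assms Mn by simp
    also have "\<dots> = (\<Sum>j\<le>n+1. int ((M - 2*j) * ((M - 1 - j) choose j)))"
      by (rule sum_ext) (simp add: Mn)
    also have "\<dots> = (\<Sum>j\<le>n+1. (int n + 2 - 2 * int j) * int ((n + 1 - j) choose j))"
    proof (intro sum.cong refl)
      fix j assume "j \<in> {..n+1}"
      show "int ((M - 2*j) * ((M - 1 - j) choose j)) = (int n + 2 - 2 * int j) * int ((n + 1 - j) choose j)"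
      proof (cases "2*j \<le> M")
        case True then show ?thesis using Mn by (simp add: of_nat_diff)
      next
        case False then have "n + 1 - j < j" using Mn by linarith
        then show ?thesis using Mn by simp
      qed
    qed
    finally show ?thesis .
  qed
  have g2: "int (g M) = (int n + 2) * int (FF (n+1)) - 2 * int (GG (n+1))"
    unfolding gi FF_def GG_def by (simp add: algebra_simps sum_distrib_left sum_subtractf)
  have hi: "int (h M) = int (GG (n+1)) + int (FF (n+1))"
  proof -
    have "h M = (\<Sum>i\<le>(n+1)+1. (i + 1) * ((M - 1 - i) choose i))" using h_formula[of M] assms Mn by simp
    then have "int (h M) = (\<Sum>i\<le>(n+1)+1. int ((i + 1) * ((n + 1 - i) choose i)))" using Mn by simp
    also have "\<dots> = (\<Sum>i\<le>n+1. int ((i + 1) * ((n + 1 - i) choose i)))"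
      by (rule sum_ext) (auto simp: binomial_eq_0)
    finally show ?thesis unfolding FF_def GG_def by (simp add: algebra_simps sum.distrib)
  qed
  have ri: "int (card (RR M)) = int (FF n) + int (GG n)"
  proof -
    have "card (RR M) = (\<Sum>b\<le>n+2. (n - b) choose b) + (\<Sum>t\<le>n+2. t * ((n - t) choose t))"
      using rr_formula[of M] Mn by simp
    then have "int (card (RR M)) = (\<Sum>b\<le>n+2. int ((n - b) choose b)) + (\<Sum>t\<le>n+2. int (t * ((n - t) choose t)))"
      by simp
    also have "(\<Sum>b\<le>n+2. int ((n - b) choose b)) = (\<Sum>b\<le>n. int ((n - b) choose b))"
      by (rule sum_ext) simp
    also have "(\<Sum>t\<le>n+2. int (t * ((n - t) choose t))) = (\<Sum>t\<le>n. int (t * ((n - t) choose t)))"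
      by (rule sum_ext) simp
    finally show ?thesis unfolding FF_def GG_def by simp
  qed
  have "int (g M) - int (h M) = int (card (RR M))"
    using g2 hi ri key[of n] by (simp add: algebra_simps)
  then show ?thesis by (simp add: RR_def)
qed

end
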